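(* Let $m,n\geq 2$ be integers, where any cycle $C_m$ or $C_n$ appearing below is assumed to have length at least $3$, and let $T_n$ ($T_m$) denote any tree of order $n$ ($m$). Then: 1. $C_{cc}(K_m\Box K_n)=\max\{m,n\}$. 2. $C_{cc}(K_m\Box C_n)=\max\{n,\ mn-2m\}$. 3. $C_{cc}(K_m\Box T_n)=\max\{n,\ mn-m\}$. 4. $C_{cc}(C_m\Box C_n)=\max\{mn-2n,\ mn-2m\}$. 5. $C_{cc}(C_m\Box T_n)=\max\{mn-2n,\ mn-m\}$. 6. $C_{cc}(T_m\Box T_n)=\max\{mn-n,\ mn-m\}$.
   Context: All graphs are finite, simple and undirected. $K_\ell$ is the complete graph, $C_\ell$ the cycle, of order $\ell$. For a graph $G$ and $S\subseteq V(G)$, the cycle interval $\langle S\rangle$ consists of the vertices of $S$ together with every vertex $w\in V(G)\setminus S$ such that $G[S\cup\{w\}]$ contains a cycle through $w$; $S$ is cycle convex if $\langle S\rangle=S$. The cycle convexity number $C_{cc}(G)$ is the maximum cardinality of a proper (i.e. $\neq V(G)$) cycle convex subset of $V(G)$. The Cartesian product $G\Box H$ has vertex set $V(G)\times V(H)$, with $(g_1,h_1)\sim(g_2,h_2)$ iff ($g_1\sim g_2$ and $h_1=h_2$) or ($g_1=g_2$ and $h_1\sim h_2$). *)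

theory Defs
  imports Main
begin

type_synonym 'a graph = "'a set \<times> ('a \<Rightarrow> 'a \<Rightarrow> bool)"

definition verts :: "'a graph \<Rightarrow> 'a set" where "verts G = fst G"
definition adj :: "'a graph \<Rightarrow> 'a \<Rightarrow> 'a \<Rightarrow> bool" where "adj G = snd G"

definition simple_graph :: "'a graph \<Rightarrow> bool" where
  "simple_graph G \<longleftrightarrow> finite (verts G) \<and>
     (\<forall>x y. adj G x y \<longrightarrow> x \<in> verts G \<and> y \<in> verts G \<and> x \<noteq> y \<and> adj G y x)"

definition is_cycle :: "'a graph \<Rightarrow> 'a list \<Rightarrow> bool" where
  "is_cycle G xs \<longleftrightarrow> length xs \<ge> 3 \<and> distinct xs \<and> set xs \<subseteq> verts G \<and>
     (\<forall>i < length xs. adj G (xs ! i) (xs ! ((i + 1) mod length xs)))"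

definition induced_cycle_through :: "'a graph \<Rightarrow> 'a set \<Rightarrow> 'a \<Rightarrow> bool" where
  "induced_cycle_through G X w \<longleftrightarrow> (\<exists>xs. is_cycle G xs \<and> set xs \<subseteq> X \<and> w \<in> set xs)"

definition cycle_interval :: "'a graph \<Rightarrow> 'a set \<Rightarrow> 'a set" where
  "cycle_interval G S = S \<union> {w \<in> verts G - S. induced_cycle_through G (S \<union> {w}) w}"

definition cycle_convex :: "'a graph \<Rightarrow> 'a set \<Rightarrow> bool" where
  "cycle_convex G S \<longleftrightarrow> S \<subseteq> verts G \<and> cycle_interval G S = S"

definition C_cc :: "'a graph \<Rightarrow> nat" where
  "C_cc G = Max {card S | S. S \<subseteq> verts G \<and> S \<noteq> verts G \<and> cycle_convex G S}"

definition cart_prod :: "'a graph \<Rightarrow> 'b graph \<Rightarrow> ('a \<times> 'b) graph" (infixr "\<box>" 80) where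
  "cart_prod G H = (verts G \<times> verts H,
     \<lambda>(g1, h1) (g2, h2). (adj G g1 g2 \<and> h1 = h2) \<or> (g1 = g2 \<and> adj H h1 h2))"

definition complete_graph :: "nat \<Rightarrow> nat graph" where
  "complete_graph n = ({0..<n}, \<lambda>i j. i < n \<and> j < n \<and> i \<noteq> j)"

definition cycle_graph :: "nat \<Rightarrow> nat graph" where
  "cycle_graph n = ({0..<n}, \<lambda>i j. i < n \<and> j < n \<and> i \<noteq> j \<and>
                      (j = (i + 1) mod n \<or> i = (j + 1) mod n))"

definition connected_graph :: "'a graph \<Rightarrow> bool" where
  "connected_graph G \<longleftrightarrow> (\<forall>x \<in> verts G. \<forall>y \<in> verts G. (adj G)\<^sup>*\<^sup>* x y)"

definition is_tree :: "'a graph \<Rightarrow> bool" where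
  "is_tree G \<longleftrightarrow> simple_graph G \<and> verts G \<noteq> {} \<and> connected_graph G \<and> \<not> (\<exists>xs. is_cycle G xs)"

end

theory Submission
  imports Defs
begin

lemma verts_pair[simp]: "verts (A, R) = A" by (simp add: verts_def)
lemma adj_pair[simp]: "adj (A, R) = R" by (simp add: adj_def)
lemma verts_prod[simp]: "verts (G \<box> H) = verts G \<times> verts H" by (simp add: cart_prod_def)
lemma adj_prod[simp]: "adj (G \<box> H) (g1,h1) (g2,h2) \<longleftrightarrow> (adj G g1 g2 \<and> h1 = h2) \<or> (g1 = g2 \<and> adj H h1 h2)"
  by (simp add: cart_prod_def)

lemma simpleD:
  assumes "simple_graph G" "adj G x y"
  shows "x \<in> verts G" "y \<in> verts G" "x \<noteq> y" "adj G y x"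
  using assms by (auto simp: simple_graph_def)

lemma sym_prod:
  assumes "simple_graph G" "simple_graph H"
  shows "\<forall>x y. adj (G \<box> H) x y \<longrightarrow> adj (G \<box> H) y x"
  using assms unfolding simple_graph_def by (auto simp: split_paired_All)

lemma cycle_two_nbrs:
  assumes sg: "\<forall>x y. adj G x y \<longrightarrow> adj G y x" and cyc: "is_cycle G xs" and sub: "set xs \<subseteq> X \<union> {w}"
    and win: "w \<in> set xs" and wX: "w \<notin> X"
  shows "\<exists>u v. u \<in> X \<and> v \<in> X \<and> u \<noteq> v \<and> adj G w u \<and> adj G w v"
proof -
  define L where "L = length xs"
  have L3: "L \<ge> 3" and dist: "distinct xs"
    and ad: "\<And>i. i < L \<Longrightarrow> adj G (xs ! i) (xs ! ((i + 1) mod L))"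
    using cyc unfolding is_cycle_def L_def by auto
  obtain i where i: "i < L" "xs ! i = w" using win unfolding L_def by (metis in_set_conv_nth)
  define j where "j = (if i + 1 < L then i + 1 else 0)"
  define k where "k = (if i = 0 then L - 1 else i - 1)"
  have iL: "i + 1 < L \<or> i + 1 = L" using i by arith
  have j: "j < L" "j \<noteq> i" "j = (i + 1) mod L" using L3 iL unfolding j_def by auto
  have k: "k < L" "k \<noteq> i" "(k + 1) mod L = i" using L3 i unfolding k_def by auto
  have jk: "j \<noteq> k" using L3 i unfolding j_def k_def by auto
  have neq: "xs ! j \<noteq> xs ! k" "xs ! j \<noteq> w" "xs ! k \<noteq> w"
    using dist j k jk i L_def by (auto simp: nth_eq_iff_index_eq)
  have inX: "xs ! j \<in> X" "xs ! k \<in> X"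
    using sub neq j(1) k(1) L_def nth_mem by fastforce+
  have a1: "adj G w (xs ! j)" using ad[OF i(1)] i j by simp
  have "adj G (xs ! k) w" using ad[OF k(1)] k i by simp
  then have a2: "adj G w (xs ! k)" using sg by blast
  show ?thesis using inX neq a1 a2 by blast
qed

lemma not_interval:
  assumes "\<forall>x y. adj G x y \<longrightarrow> adj G y x" "w \<notin> X"
    "\<forall>u v. u \<in> X \<longrightarrow> v \<in> X \<longrightarrow> adj G w u \<longrightarrow> adj G w v \<longrightarrow> u = v"
  shows "\<not> induced_cycle_through G (X \<union> {w}) w"
  using cycle_two_nbrs[OF assms(1) _ _ _ assms(2)] assms(3)
  unfolding induced_cycle_through_def by blast

lemma convex_no_cycle:
  assumes "cycle_convex G S" "w \<in> verts G" "w \<notin> S" "is_cycle G xs" "set xs \<subseteq> S \<union> {w}" "w \<in> set xs"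
  shows False
proof -
  have "w \<in> cycle_interval G S" using assms
    unfolding cycle_interval_def induced_cycle_through_def by blast
  thus False using assms(1,3) unfolding cycle_convex_def by blast
qed

lemma is_cycle3:
  assumes "distinct [a,b,c]" "{a,b,c} \<subseteq> verts G" "adj G a b" "adj G b c" "adj G c a"
  shows "is_cycle G [a,b,c]"
  unfolding is_cycle_def
proof (intro conjI allI impI)
  fix i assume "i < length [a,b,c]"
  then have "i = 0 \<or> i = 1 \<or> i = 2" by auto
  then show "adj G ([a,b,c] ! i) ([a,b,c] ! ((i + 1) mod length [a,b,c]))" using assms by auto
qed (use assms in auto)

lemma is_cycle4:
  assumes "distinct [a,b,c,d]" "{a,b,c,d} \<subseteq> verts G" "adj G a b" "adj G b c" "adj G c d" "adj G d a"
  shows "is_cycle G [a,b,c,d]"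
  unfolding is_cycle_def
proof (intro conjI allI impI)
  fix i assume "i < length [a,b,c,d]"
  then have "i = 0 \<or> i = 1 \<or> i = 2 \<or> i = 3" by auto
  then show "adj G ([a,b,c,d] ! i) ([a,b,c,d] ! ((i + 1) mod length [a,b,c,d]))" using assms by auto
qed (use assms in auto)

lemma map_layer:
  assumes "is_cycle G xs" "h \<in> verts H"
  shows "is_cycle (G \<box> H) (map (\<lambda>x. (x, h)) xs)"
proof -
  have "length xs > 0" using assms unfolding is_cycle_def by auto
  then show ?thesis using assms unfolding is_cycle_def by (auto simp: distinct_map inj_on_def)
qed

lemma map_fiber:
  assumes "is_cycle H ys" "g \<in> verts G"
  shows "is_cycle (G \<box> H) (map (\<lambda>y. (g, y)) ys)"
proof -
  have "length ys > 0" using assms unfolding is_cycle_def by auto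
  then show ?thesis using assms unfolding is_cycle_def by (auto simp: distinct_map inj_on_def)
qed


definition good_low :: "'a graph \<Rightarrow> nat \<Rightarrow> bool" where
  "good_low G k \<longleftrightarrow> (\<exists>B. B \<subseteq> verts G \<and> B \<noteq> verts G \<and> card B = k \<and>
     (\<forall>w\<in>verts G - B. \<forall>u v. u \<in> B \<longrightarrow> v \<in> B \<longrightarrow> adj G w u \<longrightarrow> adj G w v \<longrightarrow> u = v))"

definition good_up :: "'a graph \<Rightarrow> nat \<Rightarrow> bool" where
  "good_up G k \<longleftrightarrow> (\<forall>T. T \<subseteq> verts G \<longrightarrow> T \<noteq> verts G \<longrightarrow> cycle_convex G T \<longrightarrow> card T \<le> k)"

lemma lower_layer:
  assumes sG: "simple_graph G" and sH: "simple_graph H" and lG: "good_low G a"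
    and ne: "verts H \<noteq> {}"
  shows "\<exists>S. S \<subseteq> verts (G \<box> H) \<and> S \<noteq> verts (G \<box> H) \<and> cycle_convex (G \<box> H) S
           \<and> card S = card (verts H) * a"
proof -
  obtain B where B: "B \<subseteq> verts G" "B \<noteq> verts G" "card B = a"
    and sp: "\<forall>w\<in>verts G - B. \<forall>u v. u \<in> B \<longrightarrow> v \<in> B \<longrightarrow> adj G w u \<longrightarrow> adj G w v \<longrightarrow> u = v"
    using lG unfolding good_low_def by blast
  define S where "S = B \<times> verts H"
  have sub: "S \<subseteq> verts (G \<box> H)" using B unfolding S_def by auto
  obtain g0 where g0: "g0 \<in> verts G" "g0 \<notin> B" using B by blast
  obtain h0 where h0: "h0 \<in> verts H" using ne by blast
  have neq: "S \<noteq> verts (G \<box> H)" using g0 h0 unfolding S_def by auto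
  have fin: "finite (verts H)" using sH unfolding simple_graph_def by auto
  have card: "card S = card (verts H) * a" using B fin unfolding S_def by (simp add: card_cartesian_product)
  have "cycle_interval (G \<box> H) S = S"
  proof -
    have "\<not> induced_cycle_through (G \<box> H) (S \<union> {w}) w" if w: "w \<in> verts (G \<box> H) - S" for w
    proof -
      obtain g h where gh: "w = (g, h)" by fastforce
      have g: "g \<in> verts G" "g \<notin> B" "h \<in> verts H" using w gh unfolding S_def by auto
      show ?thesis
      proof (rule not_interval[OF sym_prod[OF sG sH]])
        show "w \<notin> S" using w by blast
        show "\<forall>u v. u \<in> S \<longrightarrow> v \<in> S \<longrightarrow> adj (G \<box> H) w u \<longrightarrow> adj (G \<box> H) w v \<longrightarrow> u = v"
        proof (intro allI impI)
          fix u v assume u: "u \<in> S" and v: "v \<in> S" and au: "adj (G \<box> H) w u" and av: "adj (G \<box> H) w v"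
          obtain g1 h1 where u': "u = (g1, h1)" by fastforce
          obtain g2 h2 where v': "v = (g2, h2)" by fastforce
          have "g1 \<in> B" "g2 \<in> B" using u v u' v' unfolding S_def by auto
          then have "adj G g g1 \<and> h1 = h" "adj G g g2 \<and> h2 = h"
            using au av gh u' v' g by auto
          then show "u = v" using sp g \<open>g1 \<in> B\<close> \<open>g2 \<in> B\<close> u' v' by auto
        qed
      qed
    qed
    then show ?thesis unfolding cycle_interval_def by blast
  qed
  then show ?thesis using sub neq card unfolding cycle_convex_def by blast
qed

lemma lower_fiber:
  assumes sG: "simple_graph G" and sH: "simple_graph H" and lH: "good_low H b"
    and ne: "verts G \<noteq> {}"
  shows "\<exists>S. S \<subseteq> verts (G \<box> H) \<and> S \<noteq> verts (G \<box> H) \<and> cycle_convex (G \<box> H) S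
           \<and> card S = card (verts G) * b"
proof -
  obtain B where B: "B \<subseteq> verts H" "B \<noteq> verts H" "card B = b"
    and sp: "\<forall>w\<in>verts H - B. \<forall>u v. u \<in> B \<longrightarrow> v \<in> B \<longrightarrow> adj H w u \<longrightarrow> adj H w v \<longrightarrow> u = v"
    using lH unfolding good_low_def by blast
  define S where "S = verts G \<times> B"
  have sub: "S \<subseteq> verts (G \<box> H)" using B unfolding S_def by auto
  obtain h0 where h0: "h0 \<in> verts H" "h0 \<notin> B" using B by blast
  obtain g0 where g0: "g0 \<in> verts G" using ne by blast
  have neq: "S \<noteq> verts (G \<box> H)" using g0 h0 unfolding S_def by auto
  have fin: "finite (verts G)" using sG unfolding simple_graph_def by auto
  have card: "card S = card (verts G) * b" using B fin unfolding S_def by (simp add: card_cartesian_product)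
  have "cycle_interval (G \<box> H) S = S"
  proof -
    have "\<not> induced_cycle_through (G \<box> H) (S \<union> {w}) w" if w: "w \<in> verts (G \<box> H) - S" for w
    proof -
      obtain g h where gh: "w = (g, h)" by fastforce
      have g: "h \<in> verts H" "h \<notin> B" "g \<in> verts G" using w gh unfolding S_def by auto
      show ?thesis
      proof (rule not_interval[OF sym_prod[OF sG sH]])
        show "w \<notin> S" using w by blast
        show "\<forall>u v. u \<in> S \<longrightarrow> v \<in> S \<longrightarrow> adj (G \<box> H) w u \<longrightarrow> adj (G \<box> H) w v \<longrightarrow> u = v"
        proof (intro allI impI)
          fix u v assume u: "u \<in> S" and v: "v \<in> S" and au: "adj (G \<box> H) w u" and av: "adj (G \<box> H) w v"
          obtain g1 h1 where u': "u = (g1, h1)" by fastforce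
          obtain g2 h2 where v': "v = (g2, h2)" by fastforce
          have "h1 \<in> B" "h2 \<in> B" using u v u' v' unfolding S_def by auto
          then have "adj H h h1 \<and> g1 = g" "adj H h h2 \<and> g2 = g"
            using au av gh u' v' g by auto
          then show "u = v" using sp g \<open>h1 \<in> B\<close> \<open>h2 \<in> B\<close> u' v' by auto
        qed
      qed
    qed
    then show ?thesis unfolding cycle_interval_def by blast
  qed
  then show ?thesis using sub neq card unfolding cycle_convex_def by blast
qed


lemma upper:
  assumes sG: "simple_graph G" and sH: "simple_graph H"
    and cG: "connected_graph G" and cH: "connected_graph H"
    and uG: "good_up G a" and uH: "good_up H b"
    and Ssub: "S \<subseteq> verts G \<times> verts H" and Sne: "S \<noteq> verts G \<times> verts H"
    and conv: "cycle_convex (G \<box> H) S"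
  shows "card S \<le> max (card (verts H) * a) (card (verts G) * b)"
proof -
  define T where "T h = {g \<in> verts G. (g, h) \<in> S}" for h
  define F where "F g = {h \<in> verts H. (g, h) \<in> S}" for g
  have finG: "finite (verts G)" and finH: "finite (verts H)"
    using sG sH unfolding simple_graph_def by auto
  have sq: "(g, h) \<in> S" if "g \<in> verts G" "h \<in> verts H" "adj G g g'" "adj H h h'"
      "(g', h) \<in> S" "(g', h') \<in> S" "(g, h') \<in> S" for g h g' h'
  proof (rule ccontr)
    assume nin: "(g, h) \<notin> S"
    have d: "g \<noteq> g'" "h \<noteq> h'" "g' \<in> verts G" "h' \<in> verts H" "adj G g' g" "adj H h' h"
      using simpleD[OF sG that(3)] simpleD[OF sH that(4)] by auto
    have cyc: "is_cycle (G \<box> H) [(g,h),(g',h),(g',h'),(g,h')]"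
      by (rule is_cycle4) (use d that in auto)
    show False
      by (rule convex_no_cycle[OF conv, of "(g,h)" "[(g,h),(g',h),(g',h'),(g,h')]"])
         (use that nin cyc in auto)
  qed
  have Tconv: "cycle_convex G (T h)" if h: "h \<in> verts H" for h
  proof -
    have "\<not> induced_cycle_through G (T h \<union> {w}) w" if w: "w \<in> verts G - T h" for w
    proof
      assume "induced_cycle_through G (T h \<union> {w}) w"
      then obtain xs where xs: "is_cycle G xs" "set xs \<subseteq> T h \<union> {w}" "w \<in> set xs"
        unfolding induced_cycle_through_def by blast
      show False
        by (rule convex_no_cycle[OF conv, of "(w,h)" "map (\<lambda>x. (x, h)) xs"])
           (use w h xs map_layer[OF xs(1) h] in \<open>auto simp: T_def\<close>)
    qed
    then show ?thesis unfolding cycle_convex_def cycle_interval_def T_def by auto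
  qed
  have Fconv: "cycle_convex H (F g)" if g: "g \<in> verts G" for g
  proof -
    have "\<not> induced_cycle_through H (F g \<union> {w}) w" if w: "w \<in> verts H - F g" for w
    proof
      assume "induced_cycle_through H (F g \<union> {w}) w"
      then obtain xs where xs: "is_cycle H xs" "set xs \<subseteq> F g \<union> {w}" "w \<in> set xs"
        unfolding induced_cycle_through_def by blast
      show False
        by (rule convex_no_cycle[OF conv, of "(g,w)" "map (\<lambda>x. (g, x)) xs"])
           (use w g xs map_fiber[OF xs(1) g] in \<open>auto simp: F_def\<close>)
    qed
    then show ?thesis unfolding cycle_convex_def cycle_interval_def F_def by auto
  qed
  have A: "(g, h) \<in> S" if "(adj H)\<^sup>*\<^sup>* h0 h" "\<forall>h\<in>verts H. (g1, h) \<in> S" "adj G g1 g" "(g, h0) \<in> S"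
    for g g1 h0 h
    using that(1)
  proof (induction rule: rtranclp_induct)
    case base
    then show ?case using that(4) .
  next
    case (step y z)
    have yz: "y \<in> verts H" "z \<in> verts H" "adj H z y" using simpleD[OF sH step(2)] by auto
    have gg: "g \<in> verts G" "adj G g g1" using simpleD[OF sG that(3)] by auto
    show ?case by (rule sq[of g z g1 y]) (use yz gg step that(2) in auto)
  qed
  have full: False if h0: "h0 \<in> verts H" "T h0 = verts G" and g0: "g0 \<in> verts G" "F g0 = verts H"
    for h0 g0
  proof -
    have B: "\<forall>h\<in>verts H. (g, h) \<in> S" if "(adj G)\<^sup>*\<^sup>* g0 g" for g
      using that
    proof (induction rule: rtranclp_induct)
      case base
      then show ?case using g0 unfolding F_def by auto
    next
      case (step y z)
      have "z \<in> verts G" using simpleD[OF sG step(2)] by auto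
      then have "(z, h0) \<in> S" using h0 unfolding T_def by auto
      then show ?case using A[OF _ step(3) step(2)] cH h0(1) unfolding connected_graph_def by blast
    qed
    have "verts G \<times> verts H \<subseteq> S"
    proof clarify
      fix g h assume "g \<in> verts G" "h \<in> verts H"
      then show "(g, h) \<in> S" using B cG g0(1) unfolding connected_graph_def by blast
    qed
    then show False using Ssub Sne by blast
  qed
  have cardT: "card S = (\<Sum>h\<in>verts H. card (T h))"
  proof -
    have "S = (\<lambda>(h, g). (g, h)) ` (SIGMA h:verts H. T h)"
      using Ssub unfolding T_def by force
    moreover have "inj_on (\<lambda>(h, g). (g, h)) (SIGMA h:verts H. T h)"
      by (auto simp: inj_on_def)
    ultimately have "card S = card (SIGMA h:verts H. T h)" by (simp add: card_image)
    also have "\<dots> = (\<Sum>h\<in>verts H. card (T h))" using finH finG by (simp add: T_def)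
    finally show ?thesis .
  qed
  have cardF: "card S = (\<Sum>g\<in>verts G. card (F g))"
  proof -
    have eq: "S = (SIGMA g:verts G. F g)" using Ssub unfolding F_def by force
    have "\<forall>g\<in>verts G. finite (F g)" using finH unfolding F_def by auto
    then have "card (SIGMA g:verts G. F g) = (\<Sum>g\<in>verts G. card (F g))" using finG by simp
    then show ?thesis using eq by simp
  qed
  show ?thesis
  proof (cases "\<exists>h\<in>verts H. T h = verts G")
    case True
    then obtain h0 where h0: "h0 \<in> verts H" "T h0 = verts G" by blast
    have "\<forall>g\<in>verts G. F g \<noteq> verts H" using full[OF h0] by blast
    then have "\<forall>g\<in>verts G. card (F g) \<le> b"
      using uH Fconv unfolding good_up_def F_def by auto
    then have "card S \<le> card (verts G) * b" unfolding cardF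
      using sum_bounded_above[of "verts G" "\<lambda>g. card (F g)" b] by auto
    then show ?thesis by auto
  next
    case False
    then have "\<forall>h\<in>verts H. card (T h) \<le> a"
      using uG Tconv unfolding good_up_def T_def by auto
    then have "card S \<le> card (verts H) * a" unfolding cardT
      using sum_bounded_above[of "verts H" "\<lambda>h. card (T h)" a] by auto
    then show ?thesis by auto
  qed
qed


lemma prod_Ccc:
  assumes sG: "simple_graph G" and sH: "simple_graph H"
    and cG: "connected_graph G" and cH: "connected_graph H"
    and lG: "good_low G a" and uG: "good_up G a" and lH: "good_low H b" and uH: "good_up H b"
  shows "C_cc (G \<box> H) = max (card (verts H) * a) (card (verts G) * b)"
proof -
  define M where "M = {card S | S. S \<subseteq> verts (G \<box> H) \<and> S \<noteq> verts (G \<box> H) \<and> cycle_convex (G \<box> H) S}"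
  have neG: "verts G \<noteq> {}" using lG unfolding good_low_def by blast
  have neH: "verts H \<noteq> {}" using lH unfolding good_low_def by blast
  have finG: "finite (verts G)" and finH: "finite (verts H)"
    using sG sH unfolding simple_graph_def by auto
  have fin: "finite M"
  proof -
    have "M \<subseteq> card ` Pow (verts (G \<box> H))" unfolding M_def by auto
    moreover have "finite (card ` Pow (verts (G \<box> H)))" using finG finH by simp
    ultimately show ?thesis by (rule finite_subset)
  qed
  have m1: "card (verts H) * a \<in> M"
  proof -
    obtain S where "S \<subseteq> verts (G \<box> H)" "S \<noteq> verts (G \<box> H)" "cycle_convex (G \<box> H) S"
      "card S = card (verts H) * a" using lower_layer[OF sG sH lG neH] by blast
    then show ?thesis unfolding M_def by (metis (mono_tags, lifting) mem_Collect_eq)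
  qed
  have m2: "card (verts G) * b \<in> M"
  proof -
    obtain S where "S \<subseteq> verts (G \<box> H)" "S \<noteq> verts (G \<box> H)" "cycle_convex (G \<box> H) S"
      "card S = card (verts G) * b" using lower_fiber[OF sG sH lH neG] by blast
    then show ?thesis unfolding M_def by (metis (mono_tags, lifting) mem_Collect_eq)
  qed
  have ub: "y \<le> max (card (verts H) * a) (card (verts G) * b)" if "y \<in> M" for y
    using that upper[OF sG sH cG cH uG uH] unfolding M_def by auto
  have "Max M = max (card (verts H) * a) (card (verts G) * b)"
    by (rule Max_eqI[OF fin ub]) (use m1 m2 in \<open>auto simp: max_def\<close>)
  then show ?thesis unfolding C_cc_def M_def .
qed


lemma verts_complete[simp]: "verts (complete_graph m) = {0..<m}"
  by (simp add: complete_graph_def)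
lemma adj_complete[simp]: "adj (complete_graph m) i j \<longleftrightarrow> i < m \<and> j < m \<and> i \<noteq> j"
  by (simp add: complete_graph_def)
lemma verts_cycle[simp]: "verts (cycle_graph m) = {0..<m}"
  by (simp add: cycle_graph_def)
lemma adj_cycle[simp]: "adj (cycle_graph m) i j \<longleftrightarrow> i < m \<and> j < m \<and> i \<noteq> j \<and>
                      (j = (i + 1) mod m \<or> i = (j + 1) mod m)"
  by (simp add: cycle_graph_def)

lemma simple_complete: "simple_graph (complete_graph m)"
  unfolding simple_graph_def by auto

lemma simple_cycle: "simple_graph (cycle_graph m)"
  unfolding simple_graph_def by auto

lemma connected_complete: "connected_graph (complete_graph m)"
  unfolding connected_graph_def
proof (intro ballI)
  fix x y assume "x \<in> verts (complete_graph m)" "y \<in> verts (complete_graph m)"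
  then show "(adj (complete_graph m))\<^sup>*\<^sup>* x y"
    by (cases "x = y") (auto intro: r_into_rtranclp)
qed

lemma suc_mod: "(u::nat) < m \<Longrightarrow> (u + 1) mod m = (if u + 1 = m then 0 else u + 1)"
  by auto

lemma connected_cycle:
  assumes "m \<ge> 3"
  shows "connected_graph (cycle_graph m)"
proof -
  let ?r = "adj (cycle_graph m)"
  have e: "?r j (j + 1)" "?r (j + 1) j" if "j + 1 < m" for j
    using that assms by (auto simp: suc_mod)
  have f: "?r\<^sup>*\<^sup>* 0 j \<and> ?r\<^sup>*\<^sup>* j 0" if "j < m" for j
    using that
  proof (induction j)
    case 0
    then show ?case by auto
  next
    case (Suc j)
    then have "j + 1 < m" by simp
    then show ?case using Suc e[of j]
      by (metis Suc_eq_plus1 Suc_lessD converse_rtranclp_into_rtranclp rtranclp.rtrancl_into_rtrancl)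
  qed
  show ?thesis unfolding connected_graph_def
  proof (intro ballI)
    fix x y assume "x \<in> verts (cycle_graph m)" "y \<in> verts (cycle_graph m)"
    then have "?r\<^sup>*\<^sup>* x 0" "?r\<^sup>*\<^sup>* 0 y" using f by auto
    then show "?r\<^sup>*\<^sup>* x y" by (rule rtranclp_trans)
  qed
qed

lemma low_complete:
  assumes "m \<ge> 2" shows "good_low (complete_graph m) 1"
  unfolding good_low_def
proof (intro exI[of _ "{0}"] conjI)
  have "1 \<in> verts (complete_graph m)" "1 \<notin> {0::nat}" using assms by auto
  then show "{0} \<noteq> verts (complete_graph m)" by blast
qed (use assms in auto)

lemma up_complete:
  shows "good_up (complete_graph m) 1"
  unfolding good_up_def
proof (intro allI impI)
  fix T assume T: "T \<subseteq> verts (complete_graph m)" "T \<noteq> verts (complete_graph m)"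
    "cycle_convex (complete_graph m) T"
  show "card T \<le> 1"
  proof (rule ccontr)
    assume "\<not> card T \<le> 1"
    moreover have "finite T" using T(1) finite_subset by auto
    ultimately obtain u v where uv: "u \<in> T" "v \<in> T" "u \<noteq> v"
      using card_le_Suc0_iff_eq by (metis One_nat_def)
    obtain w where w: "w \<in> verts (complete_graph m)" "w \<notin> T" using T by blast
    have cyc: "is_cycle (complete_graph m) [w, u, v]"
      by (rule is_cycle3) (use uv w T(1) in auto)
    show False
      by (rule convex_no_cycle[OF T(3) w cyc]) (use uv in auto)
  qed
qed

lemma dvd_suc: "u < m \<Longrightarrow> m dvd Suc u \<Longrightarrow> Suc u = m"
  by (simp add: dvd_imp_le le_antisym Suc_leI)

lemma nbr1:
  assumes "m \<ge> 3" "2 \<le> u" "adj (cycle_graph m) 1 u" shows "u = 2"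
proof -
  have u: "u < m" "u = (1 + 1) mod m \<or> 1 = (u + 1) mod m" using assms(3) unfolding adj_cycle by blast+
  have "(u + 1) mod m \<noteq> 1" unfolding suc_mod[OF u(1)] using assms(2) by auto
  moreover have "(1 + 1) mod m = (2::nat)" using assms(1) by simp
  ultimately show ?thesis using u(2) by auto
qed

lemma nbr0:
  assumes "m \<ge> 3" "2 \<le> u" "adj (cycle_graph m) 0 u" shows "u = m - 1"
proof -
  have u: "u < m" "u = (0 + 1) mod m \<or> 0 = (u + 1) mod m" using assms(3) unfolding adj_cycle by blast+
  have "(0 + 1) mod m = (1::nat)" using assms(1) by simp
  then have "0 = (u + 1) mod m" using u(2) assms(2) by auto
  then have "u + 1 = m" unfolding suc_mod[OF u(1)] by (auto split: if_splits)
  then show ?thesis by simp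
qed

lemma low_cycle:
  assumes "m \<ge> 3" shows "good_low (cycle_graph m) (m - 2)"
  unfolding good_low_def
proof (intro exI[of _ "{2..<m}"] conjI)
  show "\<forall>w\<in>verts (cycle_graph m) - {2..<m}. \<forall>u v. u \<in> {2..<m} \<longrightarrow> v \<in> {2..<m} \<longrightarrow>
      adj (cycle_graph m) w u \<longrightarrow> adj (cycle_graph m) w v \<longrightarrow> u = v"
  proof (intro ballI allI impI)
    fix w u v assume w: "w \<in> verts (cycle_graph m) - {2..<m}" and u: "u \<in> {2..<m}" and v: "v \<in> {2..<m}"
      and au: "adj (cycle_graph m) w u" and av: "adj (cycle_graph m) w v"
    have "w = 0 \<or> w = 1" using w by auto
    then show "u = v"
    proof
      assume w0: "w = 0"
      have "2 \<le> u" "2 \<le> v" using u v by auto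
      then have "u = m - 1" "v = m - 1"
        using nbr0[OF assms _ au[unfolded w0]] nbr0[OF assms _ av[unfolded w0]] by auto
      then show ?thesis by simp
    next
      assume w1: "w = 1"
      have "2 \<le> u" "2 \<le> v" using u v by auto
      then have "u = 2" "v = 2"
        using nbr1[OF assms _ au[unfolded w1]] nbr1[OF assms _ av[unfolded w1]] by auto
      then show ?thesis by simp
    qed
  qed
  have "0 \<in> verts (cycle_graph m)" "0 \<notin> {2..<m::nat}" using assms by auto
  then show "{2..<m} \<noteq> verts (cycle_graph m)" by blast
qed (use assms in auto)

lemma full_cycle:
  assumes "m \<ge> 3" shows "is_cycle (cycle_graph m) [0..<m]"
  unfolding is_cycle_def
proof (intro conjI allI impI)
  fix i assume i: "i < length [0..<m]"
  then have i': "i < m" by simp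
  have ne: "i \<noteq> (i + 1) mod m" unfolding suc_mod[OF i'] using assms by auto
  have lt: "(i + 1) mod m < m" using assms by simp
  show "adj (cycle_graph m) ([0..<m] ! i) ([0..<m] ! ((i + 1) mod length [0..<m]))"
    using i' ne lt by simp
qed (use assms in auto)

lemma up_cycle:
  assumes "m \<ge> 3" shows "good_up (cycle_graph m) (m - 2)"
  unfolding good_up_def
proof (intro allI impI)
  fix T assume T: "T \<subseteq> verts (cycle_graph m)" "T \<noteq> verts (cycle_graph m)"
    "cycle_convex (cycle_graph m) T"
  show "card T \<le> m - 2"
  proof (rule ccontr)
    assume c: "\<not> card T \<le> m - 2"
    obtain w where w: "w \<in> verts (cycle_graph m)" "w \<notin> T" using T by blast
    have "card (verts (cycle_graph m) - T) = m - card T"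
      using T(1) by (simp add: card_Diff_subset finite_subset)
    then have "card (verts (cycle_graph m) - T) \<le> 1" using c by simp
    then have "\<forall>a\<in>verts (cycle_graph m) - T. \<forall>b\<in>verts (cycle_graph m) - T. a = b"
      using card_le_Suc0_iff_eq[of "verts (cycle_graph m) - T"] by simp
    then have "verts (cycle_graph m) - T = {w}" using w by blast
    then have sub: "set [0..<m] \<subseteq> T \<union> {w}" by auto
    show False
      by (rule convex_no_cycle[OF T(3) w full_cycle[OF assms] sub]) (use w in auto)
  qed
qed

lemma tree_leaf:
  assumes t: "is_tree G"
  shows "\<exists>l\<in>verts G. \<forall>u v. adj G l u \<longrightarrow> adj G l v \<longrightarrow> u = v"
proof (rule ccontr)
  assume na: "\<not> ?thesis"
  have sg: "simple_graph G" and ne: "verts G \<noteq> {}" and nc: "\<And>xs. \<not> is_cycle G xs"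
    using t unfolding is_tree_def by auto
  have fin: "finite (verts G)" using sg unfolding simple_graph_def by auto
  define P where "P xs \<longleftrightarrow> xs \<noteq> [] \<and> distinct xs \<and> set xs \<subseteq> verts G \<and>
      (\<forall>i. Suc i < length xs \<longrightarrow> adj G (xs ! i) (xs ! Suc i))" for xs
  obtain x0 where "x0 \<in> verts G" using ne by blast
  then have "P [x0]" unfolding P_def by auto
  moreover have "\<forall>ys. P ys \<longrightarrow> length ys < Suc (card (verts G))"
    unfolding P_def using fin by (metis card_mono distinct_card less_Suc_eq_le)
  ultimately obtain xs where xs: "P xs" and mx: "\<forall>ys. P ys \<longrightarrow> length ys \<le> length xs"
    using ex_has_greatest_nat[of P "[x0]" length "Suc (card (verts G))"] by blast
  define L where "L = length xs"
  have L1: "L \<ge> 1" using xs unfolding P_def L_def by (cases xs) auto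
  define v where "v = xs ! (L - 1)"
  have vG: "v \<in> verts G" using xs L1 unfolding P_def v_def L_def by (metis diff_less less_one nth_mem subsetD zero_less_iff_neq_zero not_one_le_zero)
  obtain u1 u2 where u12: "adj G v u1" "adj G v u2" "u1 \<noteq> u2" using na vG by blast
  obtain u where u: "adj G v u" "L \<ge> 2 \<longrightarrow> u \<noteq> xs ! (L - 2)" using u12 by metis
  show False
  proof (cases "u \<in> set xs")
    case False
    have "P (xs @ [u])"
      unfolding P_def
    proof (intro conjI allI impI)
      show "distinct (xs @ [u])" using xs False unfolding P_def by auto
      show "set (xs @ [u]) \<subseteq> verts G" using xs simpleD[OF sg u(1)] unfolding P_def by auto
      fix i assume i: "Suc i < length (xs @ [u])"
      show "adj G ((xs @ [u]) ! i) ((xs @ [u]) ! Suc i)"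
      proof (cases "Suc i < L")
        case True
        then show ?thesis using xs unfolding P_def L_def by (auto simp: nth_append)
      next
        case False
        then have "i = L - 1" "Suc i = L" using i L1 unfolding L_def by auto
        then show ?thesis using u(1) L1 unfolding v_def L_def by (auto simp: nth_append)
      qed
    qed simp
    then show False using mx by fastforce
  next
    case True
    then obtain i where i: "i < L" "xs ! i = u" unfolding L_def by (metis in_set_conv_nth)
    have "u \<noteq> v" using simpleD[OF sg u(1)] by auto
    then have "i \<noteq> L - 1" using i v_def by auto
    moreover have "i \<noteq> L - 2 \<or> L < 2" using u(2) i by auto
    ultimately have i3: "i + 3 \<le> L" using i by auto
    define ys where "ys = drop i xs"
    have lys: "length ys = L - i" unfolding ys_def L_def by simp
    have "is_cycle G ys"
      unfolding is_cycle_def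
    proof (intro conjI allI impI)
      show "3 \<le> length ys" using lys i3 by simp
      show "distinct ys" using xs unfolding P_def ys_def by auto
      show "set ys \<subseteq> verts G" using xs unfolding P_def ys_def by (meson set_drop_subset subset_trans)
      fix k assume k: "k < length ys"
      show "adj G (ys ! k) (ys ! ((k + 1) mod length ys))"
      proof (cases "k + 1 < length ys")
        case True
        then have "Suc (i + k) < length xs" using lys L_def by simp
        then show ?thesis using xs True unfolding P_def ys_def by auto
      next
        case False
        then have "k + 1 = length ys" using k by simp
        then have ik: "i + k = L - 1" using lys i by simp
        have "ys ! k = v" using ik i unfolding ys_def v_def L_def by simp
        moreover have "ys ! ((k + 1) mod length ys) = u"
          using \<open>k + 1 = length ys\<close> i unfolding ys_def L_def by simp
        ultimately have "ys ! k = v" "ys ! ((k + 1) mod length ys) = u" by auto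
        then show ?thesis using u(1) by simp
      qed
    qed
    then show False using nc by blast
  qed
qed

lemma low_tree:
  assumes t: "is_tree G" shows "good_low G (card (verts G) - 1)"
proof -
  obtain l where l: "l \<in> verts G" "\<forall>u v. adj G l u \<longrightarrow> adj G l v \<longrightarrow> u = v"
    using tree_leaf[OF t] by blast
  have fin: "finite (verts G)" using t unfolding is_tree_def simple_graph_def by auto
  show ?thesis unfolding good_low_def
    by (intro exI[of _ "verts G - {l}"]) (use l fin in auto)
qed

lemma up_tree:
  assumes t: "is_tree G" shows "good_up G (card (verts G) - 1)"
proof -
  have fin: "finite (verts G)" using t unfolding is_tree_def simple_graph_def by auto
  show ?thesis unfolding good_up_def
  proof (intro allI impI)
    fix T assume "T \<subseteq> verts G" "T \<noteq> verts G"
    then have "card T < card (verts G)" using fin by (simp add: psubset_card_mono psubsetI)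
    then show "card T \<le> card (verts G) - 1" by simp
  qed
qed


theorem mainTheorem13:
  fixes m n :: nat and Tm :: "'a graph" and Tn :: "'b graph"
  assumes "m \<ge> 2" and "n \<ge> 2"
    and "is_tree Tm" and "card (verts Tm) = m"
    and "is_tree Tn" and "card (verts Tn) = n"
  shows "C_cc (complete_graph m \<box> complete_graph n) = max m n
    \<and> (n \<ge> 3 \<longrightarrow> C_cc (complete_graph m \<box> cycle_graph n) = max n (m * n - 2 * m))
    \<and> C_cc (complete_graph m \<box> Tn) = max n (m * n - m)
    \<and> (m \<ge> 3 \<and> n \<ge> 3 \<longrightarrow>
          C_cc (cycle_graph m \<box> cycle_graph n) = max (m * n - 2 * n) (m * n - 2 * m))
    \<and> (m \<ge> 3 \<longrightarrow> C_cc (cycle_graph m \<box> Tn) = max (m * n - 2 * n) (m * n - m))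
    \<and> C_cc (Tm \<box> Tn) = max (m * n - n) (m * n - m)"
proof (intro conjI impI)
  have sTm: "simple_graph Tm" and cTm: "connected_graph Tm" using assms(3) unfolding is_tree_def by auto
  have sTn: "simple_graph Tn" and cTn: "connected_graph Tn" using assms(5) unfolding is_tree_def by auto
  have lTm: "good_low Tm (m - 1)" and uTm: "good_up Tm (m - 1)"
    using low_tree[OF assms(3)] up_tree[OF assms(3)] assms(4) by auto
  have lTn: "good_low Tn (n - 1)" and uTn: "good_up Tn (n - 1)"
    using low_tree[OF assms(5)] up_tree[OF assms(5)] assms(6) by auto
  have lKm: "good_low (complete_graph m) 1" using low_complete assms(1) by blast
  have lKn: "good_low (complete_graph n) 1" using low_complete assms(2) by blast
  show "C_cc (complete_graph m \<box> complete_graph n) = max m n"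
    using prod_Ccc[OF simple_complete simple_complete connected_complete connected_complete
        lKm up_complete lKn up_complete] by (simp add: max.commute)
  show "C_cc (complete_graph m \<box> Tn) = max n (m * n - m)"
    using prod_Ccc[OF simple_complete sTn connected_complete cTn lKm up_complete lTn uTn] assms(6)
    by (simp add: diff_mult_distrib2)
  show "C_cc (Tm \<box> Tn) = max (m * n - n) (m * n - m)"
    using prod_Ccc[OF sTm sTn cTm cTn lTm uTm lTn uTn] assms(4,6)
    by (simp add: diff_mult_distrib diff_mult_distrib2 mult.commute)
  assume n3: "n \<ge> 3"
  show "C_cc (complete_graph m \<box> cycle_graph n) = max n (m * n - 2 * m)"
    using prod_Ccc[OF simple_complete simple_cycle connected_complete connected_cycle[OF n3]
        lKm up_complete low_cycle[OF n3] up_cycle[OF n3]]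
    by (simp add: diff_mult_distrib2 mult.commute)
next
  have sTn: "simple_graph Tn" and cTn: "connected_graph Tn" using assms(5) unfolding is_tree_def by auto
  have lTn: "good_low Tn (n - 1)" and uTn: "good_up Tn (n - 1)"
    using low_tree[OF assms(5)] up_tree[OF assms(5)] assms(6) by auto
  assume m3: "m \<ge> 3"
  show "C_cc (cycle_graph m \<box> Tn) = max (m * n - 2 * n) (m * n - m)"
    using prod_Ccc[OF simple_cycle sTn connected_cycle[OF m3] cTn low_cycle[OF m3] up_cycle[OF m3] lTn uTn]
      assms(6)
    by (simp add: diff_mult_distrib diff_mult_distrib2 mult.commute)
next
  assume mn: "m \<ge> 3 \<and> n \<ge> 3"
  then have m3: "m \<ge> 3" and n3: "n \<ge> 3" by auto
  show "C_cc (cycle_graph m \<box> cycle_graph n) = max (m * n - 2 * n) (m * n - 2 * m)"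
    using prod_Ccc[OF simple_cycle simple_cycle connected_cycle[OF m3] connected_cycle[OF n3]
        low_cycle[OF m3] up_cycle[OF m3] low_cycle[OF n3] up_cycle[OF n3]]
    by (simp add: diff_mult_distrib diff_mult_distrib2 mult.commute)
qed

end
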